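(* For every $\epsilon\in(0,1)$ there exists a positive integer $K=K(\epsilon)$ such that for every pair $\vec f=(f,g)\in F\times F$ and every $n>0$ there is a measurable set $S\subseteq\Omega^\infty$ with $f(S)\ge1-\epsilon$ (where $f$ is the measure induced by $\vec f$) such that every $\omega\in S$ satisfies at least one of the following: (1) $\vec f$ is $\epsilon$-close along $\omega$ at all but at most $K$ periods $t\in\{1,\dots,n\}$; or (2) $\omega\in L^{\vec f}_{\mathcal D,1-\epsilon}$, and moreover $|\mathcal D_t(\omega,\vec f)-\mathcal D_n(\omega,\vec f)|<\epsilon$ for all $t\ge n$.
   Context: Let $\Omega=\{0,1\}$, $\Omega^\infty$ the set of infinite sequences $\omega=(\omega_1,\omega_2,\dots)$, and $\omega^t=(\omega_1,\dots,\omega_t)$ (also used for the cylinder set of all sequences with this prefix; $\omega^0=\emptyset$). $\mathcal G_t$ is the $\sigma$-algebra generated by the length-$t$ cylinders and $\mathcal G_\infty$ the $\sigma$-algebra generated by all cylinders. $\Delta(\Omega)$ is the set of probability distributions on $\Omega$; for $p\in\Delta(\Omega)$ and $x\in\Omega$, $p[x]$ is the probability of $x$. A forecasting strategy is a map $f:\bigcup_{t\ge0}(\Omega\times\Delta(\Omega)\times\Delta(\Omega))^t\to\Delta(\Omega)$; $F$ is the set of all forecasting strategies. Given an ordered pair $\vec f=(f,g)\in F\times F$ and $\omega\in\Omega^\infty$, the play path $(\omega,\vec f)$ is defined recursively: $(\omega,\vec f)^0=\emptyset$ and its $t$-th entry is $(\omega_t,f((\omega,\vec f)^{t-1}),g((\omega,\vec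 f)^{t-1}))$, where $(\omega,\vec f)^t$ is its prefix of length $t$. The pair $\vec f$ induces two probability measures on $(\Omega^\infty,\mathcal G_\infty)$, again denoted $f$ and $g$, determined by $f(\omega^t)=\prod_{n=1}^t f((\omega,\vec f)^{n-1})[\omega_n]$ and $g(\omega^t)=\prod_{n=1}^t g((\omega,\vec f)^{n-1})[\omega_n]$. The finite derivative test $\mathcal D$: for $t\ge0$, $\mathcal D_{t+1}(\omega,\vec f)=\frac{f(\omega^t)}{f(\omega^t)+g(\omega^t)}$ if $f(\omega^t)>0$ or $g(\omega^t)>0$, and $\frac12$ otherwise. For a test $T$, $T(\omega,\vec f)=\lim_tT_t(\omega,\vec f)$ when it exists, and $L^{\vec f}_{T,\epsilon}=\{\omega:T(\omega,\vec f)\text{ exists and }>\epsilon\}$. The pair $\vec f$ is $\epsilon$-close along $\omega$ at period $t>0$ if $|f((\omega,\vec f)^{t-1})[\omega_t]-g((\omega,\vec f)^{t-1})[\omega_t]|<\epsilon$. *)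

theory Defs
  imports "HOL-Probability.Probability"
begin

text \<open>Omega = bool (False = 0, True = 1); Delta(Omega) = bool pmf.
  An infinite sequence omega is a function nat => bool, where omega i is the
  paper's omega_(i+1).  A history entry is (outcome, forecast of f, forecast of g).\<close>

type_synonym history = "(bool \<times> bool pmf \<times> bool pmf) list"
type_synonym strategy = "history \<Rightarrow> bool pmf"

fun play_path :: "strategy \<Rightarrow> strategy \<Rightarrow> (nat \<Rightarrow> bool) \<Rightarrow> nat \<Rightarrow> history" where
  "play_path f g \<omega> 0 = []"
| "play_path f g \<omega> (Suc t) =
     play_path f g \<omega> t @ [(\<omega> t, f (play_path f g \<omega> t), g (play_path f g \<omega> t))]"

definition cyl :: "(nat \<Rightarrow> bool) \<Rightarrow> nat \<Rightarrow> (nat \<Rightarrow> bool) set" where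
  "cyl \<omega> t = {\<omega>'. \<forall>i<t. \<omega>' i = \<omega> i}"

definition G_inf :: "(nat \<Rightarrow> bool) measure" where
  "G_inf = sigma UNIV {cyl \<omega> t | \<omega> t. True}"

definition fst_cyl_prob :: "strategy \<Rightarrow> strategy \<Rightarrow> (nat \<Rightarrow> bool) \<Rightarrow> nat \<Rightarrow> real" where
  "fst_cyl_prob f g \<omega> t = (\<Prod>i<t. pmf (f (play_path f g \<omega> i)) (\<omega> i))"

definition snd_cyl_prob :: "strategy \<Rightarrow> strategy \<Rightarrow> (nat \<Rightarrow> bool) \<Rightarrow> nat \<Rightarrow> real" where
  "snd_cyl_prob f g \<omega> t = (\<Prod>i<t. pmf (g (play_path f g \<omega> i)) (\<omega> i))"

definition induced_measure_fst :: "strategy \<Rightarrow> strategy \<Rightarrow> (nat \<Rightarrow> bool) measure \<Rightarrow> bool" where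
  "induced_measure_fst f g M \<longleftrightarrow> prob_space M \<and> sets M = sets G_inf \<and>
     (\<forall>\<omega> t. measure M (cyl \<omega> t) = fst_cyl_prob f g \<omega> t)"

text \<open>Finite derivative test: D_(t+1) for t >= 0 (the value at index 0 is
  irrelevant and set equal to D_1).\<close>
definition D_test :: "strategy \<Rightarrow> strategy \<Rightarrow> (nat \<Rightarrow> bool) \<Rightarrow> nat \<Rightarrow> real" where
  "D_test f g \<omega> s = (let t = s - 1 in
     if fst_cyl_prob f g \<omega> t > 0 \<or> snd_cyl_prob f g \<omega> t > 0
     then fst_cyl_prob f g \<omega> t / (fst_cyl_prob f g \<omega> t + snd_cyl_prob f g \<omega> t)
     else 1/2)"

definition L_D :: "strategy \<Rightarrow> strategy \<Rightarrow> real \<Rightarrow> (nat \<Rightarrow> bool) set" where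
  "L_D f g \<epsilon> = {\<omega>. convergent (D_test f g \<omega>) \<and> lim (D_test f g \<omega>) > \<epsilon>}"

definition eps_close :: "strategy \<Rightarrow> strategy \<Rightarrow> real \<Rightarrow> (nat \<Rightarrow> bool) \<Rightarrow> nat \<Rightarrow> bool" where
  "eps_close f g \<epsilon> \<omega> t \<longleftrightarrow>
     \<bar>pmf (f (play_path f g \<omega> (t - 1))) (\<omega> (t - 1)) - pmf (g (play_path f g \<omega> (t - 1))) (\<omega> (t - 1))\<bar> < \<epsilon>"

end

theory Submission
  imports Defs
begin


definition ext :: "bool list \<Rightarrow> nat \<Rightarrow> bool" where
  "ext xs i = (if i < length xs then xs ! i else False)"
definition pre :: "(nat \<Rightarrow> bool) \<Rightarrow> nat \<Rightarrow> bool list" where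
  "pre \<omega> m = map \<omega> [0..<m]"

lemma length_pre[simp]: "length (pre \<omega> m) = m" by (simp add: pre_def)
lemma ext_pre: "j < m \<Longrightarrow> ext (pre \<omega> m) j = \<omega> j" by (simp add: ext_def pre_def)
lemma take_pre: "k \<le> m \<Longrightarrow> take k (pre \<omega> m) = pre \<omega> k"
  by (simp add: pre_def take_map)

lemma play_path_local:
  "(\<And>j. j < i \<Longrightarrow> \<omega> j = \<omega>' j) \<Longrightarrow> play_path f g \<omega> i = play_path f g \<omega>' i"
  by (induction i) auto

definition cp :: "strategy \<Rightarrow> strategy \<Rightarrow> strategy \<Rightarrow> bool list \<Rightarrow> real" where
  "cp h f g xs = (\<Prod>i<length xs. pmf (h (play_path f g (ext xs) i)) (ext xs i))"

definition hist :: "strategy \<Rightarrow> strategy \<Rightarrow> bool list \<Rightarrow> history" where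
  "hist f g xs = play_path f g (ext xs) (length xs)"

lemma cp_pre: "(\<Prod>i<t. pmf (h (play_path f g \<omega> i)) (\<omega> i)) = cp h f g (pre \<omega> t)"
  unfolding cp_def
proof (rule prod.cong)
  fix i assume "i \<in> {..<length (pre \<omega> t)}"
  hence i: "i < t" by simp
  have "play_path f g \<omega> i = play_path f g (ext (pre \<omega> t)) i"
    by (rule play_path_local) (use i in \<open>auto simp: ext_pre\<close>)
  thus "pmf (h (play_path f g \<omega> i)) (\<omega> i) = pmf (h (play_path f g (ext (pre \<omega> t)) i)) (ext (pre \<omega> t) i)"
    using i by (simp add: ext_pre)
qed simp

lemma fst_pre: "fst_cyl_prob f g \<omega> t = cp f f g (pre \<omega> t)"
  unfolding fst_cyl_prob_def by (rule cp_pre)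
lemma snd_pre: "snd_cyl_prob f g \<omega> t = cp g f g (pre \<omega> t)"
  unfolding snd_cyl_prob_def by (rule cp_pre)

lemma cp_Nil[simp]: "cp h f g [] = 1" by (simp add: cp_def)

lemma ext_snoc: "j < length xs \<Longrightarrow> ext (xs @ [x]) j = ext xs j"
  by (simp add: ext_def nth_append)

lemma cp_snoc: "cp h f g (xs @ [x]) = cp h f g xs * pmf (h (hist f g xs)) x"
proof -
  have pp: "play_path f g (ext (xs @ [x])) i = play_path f g (ext xs) i" if "i \<le> length xs" for i
    by (rule play_path_local) (use that in \<open>simp add: ext_snoc\<close>)
  have "cp h f g (xs @ [x]) = (\<Prod>i<Suc (length xs). pmf (h (play_path f g (ext (xs @ [x])) i)) (ext (xs @ [x]) i))"
    by (simp add: cp_def)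
  also have "\<dots> = (\<Prod>i<length xs. pmf (h (play_path f g (ext (xs @ [x])) i)) (ext (xs @ [x]) i)) * pmf (h (hist f g xs)) x"
    by (simp add: pp hist_def ext_def)
  also have "(\<Prod>i<length xs. pmf (h (play_path f g (ext (xs @ [x])) i)) (ext (xs @ [x]) i)) = cp h f g xs"
    unfolding cp_def by (rule prod.cong) (auto simp: pp ext_snoc)
  finally show ?thesis .
qed

lemma cp_nonneg: "cp h f g xs \<ge> 0" by (simp add: cp_def prod_nonneg)
lemma cp_le1: "cp h f g xs \<le> 1" by (simp add: cp_def prod_le_1 pmf_le_1)

lemma pmf_bool_sum: "pmf (p::bool pmf) True + pmf p False = 1"
proof -
  have "(\<Sum>x\<in>UNIV. pmf p x) = 1" by (simp add: sum_pmf_eq_1)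
  thus ?thesis by (simp add: UNIV_bool add.commute)
qed

lemma cp_split: "cp h f g (xs @ [True]) + cp h f g (xs @ [False]) = cp h f g xs"
  by (simp add: cp_snoc distrib_left[symmetric] pmf_bool_sum)

lemma lists_fin: "finite {xs :: bool list. length xs = m}"
  using finite_lists_length_eq[of "UNIV :: bool set" m] by simp

lemma sum_len_Suc:
  "(\<Sum>xs\<in>{xs :: bool list. length xs = Suc m}. h xs) =
   (\<Sum>xs\<in>{xs. length xs = m}. h (xs @ [True]) + h (xs @ [False]))"
proof -
  have eq: "{xs :: bool list. length xs = Suc m} = (\<lambda>(xs, b). xs @ [b]) ` ({xs. length xs = m} \<times> UNIV)"
  proof (rule set_eqI, rule iffI)
    fix ys :: "bool list" assume "ys \<in> {xs. length xs = Suc m}"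
    hence "ys = butlast ys @ [last ys]" "length (butlast ys) = m"
      by (auto intro: append_butlast_last_id[symmetric])
    thus "ys \<in> (\<lambda>(xs, b). xs @ [b]) ` ({xs. length xs = m} \<times> UNIV)"
      by (metis (mono_tags, lifting) SigmaI UNIV_I case_prod_conv image_eqI mem_Collect_eq)
  qed auto
  have inj: "inj_on (\<lambda>(xs, b). xs @ [b]) ({xs :: bool list. length xs = m} \<times> UNIV)"
    by (auto simp: inj_on_def)
  have "(\<Sum>xs\<in>{xs :: bool list. length xs = Suc m}. h xs) = (\<Sum>(xs,b)\<in>{xs. length xs = m} \<times> UNIV. h (xs @ [b]))"
    unfolding eq by (subst sum.reindex[OF inj]) (simp add: case_prod_unfold comp_def)
  also have "\<dots> = (\<Sum>xs\<in>{xs. length xs = m}. \<Sum>b\<in>UNIV. h (xs @ [b]))"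
    by (rule sum.cartesian_product[symmetric])
  also have "\<dots> = (\<Sum>xs\<in>{xs. length xs = m}. h (xs @ [True]) + h (xs @ [False]))"
    by (simp add: UNIV_bool add.commute)
  finally show ?thesis .
qed

lemma cp_total: "(\<Sum>xs\<in>{xs :: bool list. length xs = m}. cp h f g xs) = 1"
proof (induction m)
  case 0
  have "{xs :: bool list. length xs = 0} = {[]}" by auto
  thus ?case by simp
next
  case (Suc m) thus ?case by (simp add: sum_len_Suc cp_split)
qed



lemma Phi_snoc:
  assumes "length xs = m" "n \<le> m"
  shows "(\<exists>k\<in>{n..Suc m}. lam \<le> Y (take k (xs @ [x]))) \<longleftrightarrow>
         (\<exists>k\<in>{n..m}. lam \<le> Y (take k xs)) \<or> lam \<le> Y (xs @ [x])"
proof -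
  have t: "take k (xs @ [x]) = take k xs" if "k \<le> m" for k using that assms by simp
  have t2: "take (Suc m) (xs @ [x]) = xs @ [x]" using assms by simp
  show ?thesis
  proof
    assume "\<exists>k\<in>{n..Suc m}. lam \<le> Y (take k (xs @ [x]))"
    then obtain k where k: "k \<in> {n..Suc m}" "lam \<le> Y (take k (xs @ [x]))" by blast
    show "(\<exists>k\<in>{n..m}. lam \<le> Y (take k xs)) \<or> lam \<le> Y (xs @ [x])"
    proof (cases "k = Suc m")
      case True thus ?thesis using k t2 by simp
    next
      case False hence "k \<le> m" using k by auto
      thus ?thesis using k t by auto
    qed
  next
    assume "(\<exists>k\<in>{n..m}. lam \<le> Y (take k xs)) \<or> lam \<le> Y (xs @ [x])"
    thus "\<exists>k\<in>{n..Suc m}. lam \<le> Y (take k (xs @ [x]))"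
    proof
      assume "\<exists>k\<in>{n..m}. lam \<le> Y (take k xs)"
      then obtain k where "k \<in> {n..m}" "lam \<le> Y (take k xs)" by blast
      thus ?thesis using t[of k] by (intro bexI[of _ k]) auto
    next
      assume "lam \<le> Y (xs @ [x])"
      thus ?thesis using t2 assms by (intro bexI[of _ "Suc m"]) auto
    qed
  qed
qed

lemma Phi_base:
  assumes "length xs = n"
  shows "(\<exists>k\<in>{n..n}. lam \<le> Y (take k xs)) \<longleftrightarrow> lam \<le> Y xs"
  using assms by auto

lemma ville:
  fixes w Y :: "bool list \<Rightarrow> real"
  assumes w0: "\<And>xs. w xs \<ge> 0" and Y0: "\<And>xs. Y xs \<ge> 0"
    and sup: "\<And>xs. length xs \<ge> n \<Longrightarrow>
       w (xs @ [True]) * Y (xs @ [True]) + w (xs @ [False]) * Y (xs @ [False]) \<le> w xs * Y xs"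
    and wsplit: "\<And>xs. w (xs @ [True]) + w (xs @ [False]) = w xs"
    and nm: "n \<le> m"
  shows "lam * (\<Sum>xs\<in>{xs. length xs = m}. if (\<exists>k\<in>{n..m}. lam \<le> Y (take k xs)) then w xs else 0)
     \<le> (\<Sum>xs\<in>{xs. length xs = n}. w xs * Y xs)"
proof -
  define Phi where "Phi m xs = (\<exists>k\<in>{n..m}. lam \<le> Y (take k xs))" for m xs
  define Psi where "Psi m = (\<Sum>xs\<in>{xs :: bool list. length xs = m}. w xs * (if Phi m xs then lam else Y xs))" for m
  have step: "Psi (Suc m) \<le> Psi m" if "n \<le> m" for m
  proof -
    have "Psi (Suc m) = (\<Sum>xs\<in>{xs. length xs = m}.
        w (xs @ [True]) * (if Phi (Suc m) (xs @ [True]) then lam else Y (xs @ [True])) +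
        w (xs @ [False]) * (if Phi (Suc m) (xs @ [False]) then lam else Y (xs @ [False])))"
      unfolding Psi_def by (rule sum_len_Suc)
    also have "\<dots> \<le> Psi m" unfolding Psi_def
    proof (rule sum_mono)
      fix xs :: "bool list" assume "xs \<in> {xs. length xs = m}"
      hence l: "length xs = m" by simp
      have P: "Phi (Suc m) (xs @ [x]) \<longleftrightarrow> Phi m xs \<or> lam \<le> Y (xs @ [x])" for x
        unfolding Phi_def using Phi_snoc[OF l that] .
      show "w (xs @ [True]) * (if Phi (Suc m) (xs @ [True]) then lam else Y (xs @ [True])) +
        w (xs @ [False]) * (if Phi (Suc m) (xs @ [False]) then lam else Y (xs @ [False]))
        \<le> w xs * (if Phi m xs then lam else Y xs)"
      proof (cases "Phi m xs")
        case True thus ?thesis using P wsplit[of xs] by (simp add: distrib_right[symmetric])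
      next
        case False
        have a: "w (xs @ [x]) * (if Phi (Suc m) (xs @ [x]) then lam else Y (xs @ [x])) \<le> w (xs @ [x]) * Y (xs @ [x])" for x
          using P False w0[of "xs @ [x]"] by (auto intro: mult_left_mono)
        show ?thesis using a[of True] a[of False] sup[of xs] l that False by simp
      qed
    qed
    finally show ?thesis .
  qed
  have mono: "Psi (n + d) \<le> Psi n" for d
  proof (induction d)
    case (Suc d) thus ?case using step[of "n + d"] by simp
  qed simp
  have base: "Psi n \<le> (\<Sum>xs\<in>{xs. length xs = n}. w xs * Y xs)"
    unfolding Psi_def
  proof (rule sum_mono)
    fix xs :: "bool list" assume "xs \<in> {xs. length xs = n}"
    hence "Phi n xs \<longleftrightarrow> lam \<le> Y xs" unfolding Phi_def by auto
    thus "w xs * (if Phi n xs then lam else Y xs) \<le> w xs * Y xs"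
      using w0[of xs] by (auto intro: mult_left_mono)
  qed
  have low: "lam * (\<Sum>xs\<in>{xs. length xs = m}. if Phi m xs then w xs else 0) \<le> Psi m"
    unfolding Psi_def sum_distrib_left
  proof (rule sum_mono)
    fix xs :: "bool list"
    show "lam * (if Phi m xs then w xs else 0) \<le> w xs * (if Phi m xs then lam else Y xs)"
      using w0[of xs] Y0[of xs] by auto
  qed
  have "Psi m \<le> Psi n" using mono[of "m - n"] nm by simp
  thus ?thesis using low base unfolding Phi_def by linarith
qed

lemma doob:
  fixes w X :: "bool list \<Rightarrow> real"
  assumes w0: "\<And>xs. w xs \<ge> 0" and X0: "\<And>xs. X xs \<ge> 0"
    and sub: "\<And>xs. length xs \<ge> n \<Longrightarrow>
       w xs * X xs \<le> w (xs @ [True]) * X (xs @ [True]) + w (xs @ [False]) * X (xs @ [False])"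
    and wsplit: "\<And>xs. w (xs @ [True]) + w (xs @ [False]) = w xs"
    and nm: "n \<le> m"
  shows "lam * (\<Sum>xs\<in>{xs. length xs = m}. if (\<exists>k\<in>{n..m}. lam \<le> X (take k xs)) then w xs else 0)
     \<le> (\<Sum>xs\<in>{xs. length xs = m}. w xs * X xs)"
proof -
  define Phi where "Phi m xs = (\<exists>k\<in>{n..m}. lam \<le> X (take k xs))" for m xs
  define Dl where "Dl m = (\<Sum>xs\<in>{xs :: bool list. length xs = m}. w xs * (if Phi m xs then X xs - lam else 0))" for m
  have step: "Dl m \<le> Dl (Suc m)" if "n \<le> m" for m
  proof -
    have "Dl (Suc m) = (\<Sum>xs\<in>{xs. length xs = m}.
        w (xs @ [True]) * (if Phi (Suc m) (xs @ [True]) then X (xs @ [True]) - lam else 0) +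
        w (xs @ [False]) * (if Phi (Suc m) (xs @ [False]) then X (xs @ [False]) - lam else 0))"
      unfolding Dl_def by (rule sum_len_Suc)
    moreover have "Dl m \<le> \<dots>" unfolding Dl_def
    proof (rule sum_mono)
      fix xs :: "bool list" assume "xs \<in> {xs. length xs = m}"
      hence l: "length xs = m" by simp
      have P: "Phi (Suc m) (xs @ [x]) \<longleftrightarrow> Phi m xs \<or> lam \<le> X (xs @ [x])" for x
        unfolding Phi_def using Phi_snoc[OF l that] .
      show "w xs * (if Phi m xs then X xs - lam else 0) \<le>
        w (xs @ [True]) * (if Phi (Suc m) (xs @ [True]) then X (xs @ [True]) - lam else 0) +
        w (xs @ [False]) * (if Phi (Suc m) (xs @ [False]) then X (xs @ [False]) - lam else 0)"
      proof (cases "Phi m xs")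
        case True
        have "w xs * (X xs - lam) \<le> w (xs @ [True]) * (X (xs @ [True]) - lam) + w (xs @ [False]) * (X (xs @ [False]) - lam)"
        proof -
          have "lam * w xs = lam * w (xs @ [True]) + lam * w (xs @ [False])"
            using wsplit[of xs] by (metis distrib_left)
          thus ?thesis using sub[of xs] l that by (simp add: algebra_simps)
        qed
        thus ?thesis using P True by simp
      next
        case False
        have a: "0 \<le> w (xs @ [x]) * (if Phi (Suc m) (xs @ [x]) then X (xs @ [x]) - lam else 0)" for x
          using P False w0[of "xs @ [x]"] by auto
        show ?thesis using a[of True] a[of False] False by simp
      qed
    qed
    ultimately show ?thesis by simp
  qed
  have mono: "Dl n \<le> Dl (n + d)" for d
  proof (induction d)
    case (Suc d) thus ?case using step[of "n + d"] by simp
  qed simp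
  have base: "0 \<le> Dl n"
    unfolding Dl_def
  proof (rule sum_nonneg)
    fix xs :: "bool list" assume "xs \<in> {xs. length xs = n}"
    hence "Phi n xs \<longleftrightarrow> lam \<le> X xs" unfolding Phi_def by auto
    thus "0 \<le> w xs * (if Phi n xs then X xs - lam else 0)"
      using w0[of xs] by auto
  qed
  have "Dl n \<le> Dl m" using mono[of "m - n"] nm by simp
  hence "0 \<le> Dl m" using base by simp
  moreover have "Dl m + lam * (\<Sum>xs\<in>{xs. length xs = m}. if Phi m xs then w xs else 0)
      \<le> (\<Sum>xs\<in>{xs. length xs = m}. w xs * X xs)"
    unfolding Dl_def sum_distrib_left sum.distrib[symmetric]
  proof (rule sum_mono)
    fix xs :: "bool list"
    show "w xs * (if Phi m xs then X xs - lam else 0) + lam * (if Phi m xs then w xs else 0) \<le> w xs * X xs"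
      using w0[of xs] X0[of xs] by (auto simp: algebra_simps)
  qed
  ultimately show ?thesis unfolding Phi_def by linarith
qed



lemma sets_G_inf: "sets G_inf = sigma_sets UNIV {cyl \<omega> t | \<omega> t. True}"
  unfolding G_inf_def by (rule sets_measure_of) auto

lemma space_M: assumes "induced_measure_fst f g M" shows "space M = UNIV"
proof -
  have "sets M = sets G_inf" using assms unfolding induced_measure_fst_def by simp
  hence "space M = space G_inf" by (rule sets_eq_imp_space_eq)
  thus ?thesis unfolding G_inf_def space_measure_of_conv .
qed

lemma cyl_sets: "induced_measure_fst f g M \<Longrightarrow> cyl \<omega> t \<in> sets M"
  unfolding induced_measure_fst_def sets_G_inf by (auto intro: sigma_sets.Basic)

lemma pre_set_eq:
  "{\<omega>. P (pre \<omega> m)} = (\<Union>xs\<in>{xs. length xs = m \<and> P xs}. cyl (ext xs) m)"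
proof (rule set_eqI, rule iffI)
  fix \<omega> assume "\<omega> \<in> {\<omega>. P (pre \<omega> m)}"
  thus "\<omega> \<in> (\<Union>xs\<in>{xs. length xs = m \<and> P xs}. cyl (ext xs) m)"
    by (intro UN_I[of "pre \<omega> m"]) (auto simp: cyl_def ext_pre)
next
  fix \<omega> assume "\<omega> \<in> (\<Union>xs\<in>{xs. length xs = m \<and> P xs}. cyl (ext xs) m)"
  then obtain xs where xs: "length xs = m" "P xs" "\<forall>i<m. \<omega> i = ext xs i" by (auto simp: cyl_def)
  have "pre \<omega> m = xs" using xs by (intro nth_equalityI) (auto simp: pre_def ext_def)
  thus "\<omega> \<in> {\<omega>. P (pre \<omega> m)}" using xs by simp
qed

lemma fin_sub: "finite {xs :: bool list. length xs = m \<and> P xs}"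
  by (rule finite_subset[OF _ lists_fin[of m]]) auto

lemma pre_sets: assumes "induced_measure_fst f g M" shows "{\<omega>. P (pre \<omega> m)} \<in> sets M"
  unfolding pre_set_eq by (rule sets.finite_UN) (auto simp: fin_sub cyl_sets[OF assms])

lemma pre_measure:
  assumes "induced_measure_fst f g M"
  shows "measure M {\<omega>. P (pre \<omega> m)} \<le>
     (\<Sum>xs\<in>{xs. length xs = m}. if P xs then cp f f g xs else 0)"
proof -
  have "measure M {\<omega>. P (pre \<omega> m)} \<le> (\<Sum>xs\<in>{xs. length xs = m \<and> P xs}. measure M (cyl (ext xs) m))"
    unfolding pre_set_eq by (rule measure_UNION_le) (auto simp: fin_sub intro: cyl_sets[OF assms])
  also have "\<dots> = (\<Sum>xs\<in>{xs. length xs = m \<and> P xs}. cp f f g xs)"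
  proof (rule sum.cong)
    fix xs assume xs: "xs \<in> {xs :: bool list. length xs = m \<and> P xs}"
    have "pre (ext xs) m = xs" using xs by (intro nth_equalityI) (auto simp: pre_def ext_def)
    thus "measure M (cyl (ext xs) m) = cp f f g xs"
      using assms unfolding induced_measure_fst_def by (simp add: fst_pre)
  qed simp
  also have "\<dots> = (\<Sum>xs\<in>{xs. length xs = m}. if P xs then cp f f g xs else 0)"
  proof -
    have "{xs. length xs = m \<and> P xs} = {xs \<in> {xs. length xs = m}. P xs}" by simp
    thus ?thesis by (simp only:) (rule sum.inter_filter[OF lists_fin])
  qed
  finally show ?thesis .
qed



definition Dp :: "strategy \<Rightarrow> strategy \<Rightarrow> bool list \<Rightarrow> real" where
  "Dp f g xs = (if cp f f g xs > 0 \<or> cp g f g xs > 0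
     then cp f f g xs / (cp f f g xs + cp g f g xs) else 1/2)"

lemma D_test_Suc: "D_test f g \<omega> (Suc k) = Dp f g (pre \<omega> k)"
  by (simp add: D_test_def Dp_def fst_pre snd_pre Let_def)

lemma Dp_range: "0 \<le> Dp f g xs" "Dp f g xs \<le> 1"
  using cp_nonneg[of f f g xs] cp_nonneg[of g f g xs]
  by (auto simp: Dp_def divide_simps)

lemma WD: "(cp f f g xs + cp g f g xs) * Dp f g xs = cp f f g xs"
  using cp_nonneg[of f f g xs] cp_nonneg[of g f g xs]
  by (auto simp: Dp_def divide_simps)

lemma jensen2:
  fixes a b d d1 d2 :: real
  assumes "a \<ge> 0" "b \<ge> 0" "(a + b) * d = a * d1 + b * d2"
  shows "(a + b) * d\<^sup>2 \<le> a * d1\<^sup>2 + b * d2\<^sup>2"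
proof (cases "a + b = 0")
  case True thus ?thesis using assms by simp
next
  case False
  hence pos: "a + b > 0" using assms by simp
  have "(a + b) * ((a + b) * d\<^sup>2) = ((a + b) * d)\<^sup>2"
    by (simp add: power2_eq_square algebra_simps)
  also have "\<dots> = (a * d1 + b * d2)\<^sup>2" using assms(3) by simp
  also have "\<dots> \<le> (a + b) * (a * d1\<^sup>2 + b * d2\<^sup>2)"
  proof -
    have "(a + b) * (a * d1\<^sup>2 + b * d2\<^sup>2) - (a * d1 + b * d2)\<^sup>2 = a * b * (d1 - d2)\<^sup>2"
      by (simp add: power2_eq_square algebra_simps)
    moreover have "a * b * (d1 - d2)\<^sup>2 \<ge> 0" using assms by simp
    ultimately show ?thesis by linarith
  qed
  finally show ?thesis using pos by (simp add: mult_le_cancel_left)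
qed

lemma sq_ident:
  fixes a b d d1 d2 c :: real
  assumes "(a + b) * d = a * d1 + b * d2"
  shows "a * (d1 - c)\<^sup>2 + b * (d2 - c)\<^sup>2 - (a + b) * (d - c)\<^sup>2 = a * d1\<^sup>2 + b * d2\<^sup>2 - (a + b) * d\<^sup>2"
proof -
  have e1: "a * (d1 - c)\<^sup>2 + b * (d2 - c)\<^sup>2 = a * d1\<^sup>2 + b * d2\<^sup>2 - 2 * c * (a * d1 + b * d2) + c\<^sup>2 * (a + b)"
    by (simp add: power2_eq_square algebra_simps)
  have e2: "(a + b) * (d - c)\<^sup>2 = (a + b) * d\<^sup>2 - 2 * c * ((a + b) * d) + c\<^sup>2 * (a + b)"
    by (simp add: power2_eq_square algebra_simps)
  show ?thesis unfolding e1 e2 assms by simp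
qed

lemma hm_super:
  fixes a b c d :: real
  assumes "a \<ge> 0" "b \<ge> 0" "c \<ge> 0" "d \<ge> 0"
  shows "(if a + b = 0 then 0 else a * b / (a + b)) + (if c + d = 0 then 0 else c * d / (c + d))
     \<le> (if a + b + c + d = 0 then 0 else (a + c) * (b + d) / (a + b + c + d))"
proof (cases "a + b = 0")
  case True
  hence "a = 0" "b = 0" using assms by auto
  thus ?thesis by simp
next
  case ab: False
  show ?thesis
  proof (cases "c + d = 0")
    case True
    hence "c = 0" "d = 0" using assms by auto
    thus ?thesis by simp
  next
    case cd: False
    have x: "a + b > 0" "c + d > 0" using ab cd assms by auto
    have key: "(a * b * (c + d) + c * d * (a + b)) * (a + b + c + d) \<le> (a + c) * (b + d) * ((a + b) * (c + d))"
    proof -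
      have "(a + c) * (b + d) * ((a + b) * (c + d)) - (a * b * (c + d) + c * d * (a + b)) * (a + b + c + d) = (a * d - b * c)\<^sup>2"
        by (simp add: power2_eq_square algebra_simps)
      thus ?thesis by (metis diff_ge_0_iff_ge zero_le_power2)
    qed
    have "a * b / (a + b) + c * d / (c + d) = (a * b * (c + d) + c * d * (a + b)) / ((a + b) * (c + d))"
      using x by (simp add: field_simps)
    also have "\<dots> \<le> (a + c) * (b + d) / (a + b + c + d)"
      using x key by (simp add: divide_simps add_pos_pos) 
    finally show ?thesis using x ab cd by auto
  qed
qed

lemma bc_ineq:
  fixes p q :: real
  assumes "0 \<le> p" "p \<le> 1" "0 \<le> q" "q \<le> 1"
  shows "sqrt (p * q) + sqrt ((1 - p) * (1 - q)) \<le> sqrt (1 - (p - q)\<^sup>2)"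
proof (rule real_le_rsqrt)
  define s where "s = sqrt (p * (1 - p))"
  define t where "t = sqrt (q * (1 - q))"
  have s2: "s\<^sup>2 = p * (1 - p)" unfolding s_def using assms by simp
  have t2: "t\<^sup>2 = q * (1 - q)" unfolding t_def using assms by simp
  have A: "(sqrt (p * q))\<^sup>2 = p * q" using assms by simp
  have B: "(sqrt ((1 - p) * (1 - q)))\<^sup>2 = (1 - p) * (1 - q)" using assms by simp
  have AB: "sqrt (p * q) * sqrt ((1 - p) * (1 - q)) = s * t"
    unfolding s_def t_def real_sqrt_mult[symmetric] by (simp add: algebra_simps)
  have "(sqrt (p * q) + sqrt ((1 - p) * (1 - q)))\<^sup>2 = p * q + (1 - p) * (1 - q) + 2 * (s * t)"
    by (simp add: power2_sum A B AB)
  also have "\<dots> \<le> p * q + (1 - p) * (1 - q) + (s\<^sup>2 + t\<^sup>2)"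
    using sum_squares_bound[of s t] by simp
  also have "\<dots> = 1 - (p - q)\<^sup>2" unfolding s2 t2 by (simp add: power2_eq_square algebra_simps)
  finally show "(sqrt (p * q) + sqrt ((1 - p) * (1 - q)))\<^sup>2 \<le> 1 - (p - q)\<^sup>2" .
qed



definition W :: "strategy \<Rightarrow> strategy \<Rightarrow> bool list \<Rightarrow> real" where
  "W f g xs = cp f f g xs + cp g f g xs"

lemma W_nonneg: "W f g xs \<ge> 0" by (simp add: W_def cp_nonneg add_nonneg_nonneg)
lemma W_split: "W f g (xs @ [True]) + W f g (xs @ [False]) = W f g xs"
  using cp_split[of f f g xs] cp_split[of g f g xs] by (simp add: W_def)
lemma W_D: "W f g xs * Dp f g xs = cp f f g xs" unfolding W_def by (rule WD)
lemma W_node: "W f g xs * Dp f g xs = W f g (xs @ [True]) * Dp f g (xs @ [True]) + W f g (xs @ [False]) * Dp f g (xs @ [False])"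
  unfolding W_D by (simp add: cp_split)
lemma cp_le_W: "cp f f g xs \<le> W f g xs" by (simp add: W_def cp_nonneg)

definition SS :: "strategy \<Rightarrow> strategy \<Rightarrow> nat \<Rightarrow> real" where
  "SS f g m = (\<Sum>xs\<in>{xs. length xs = m}. W f g xs * (Dp f g xs)\<^sup>2)"

lemma node_jensen: "W f g xs * (Dp f g xs)\<^sup>2 \<le> W f g (xs @ [True]) * (Dp f g (xs @ [True]))\<^sup>2 + W f g (xs @ [False]) * (Dp f g (xs @ [False]))\<^sup>2"
  using jensen2[OF W_nonneg W_nonneg, of f g "xs @ [True]" f g "xs @ [False]" "Dp f g xs"] W_node[of f g xs] W_split[of f g xs]
  by simp

lemma SS_mono: "SS f g m \<le> SS f g (Suc m)"
  unfolding SS_def sum_len_Suc by (rule sum_mono) (rule node_jensen)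

lemma SS_incseq: "incseq (SS f g)"
  by (rule incseq_SucI) (rule SS_mono)

lemma SS_bound: "SS f g m \<le> 2"
proof -
  have "SS f g m \<le> (\<Sum>xs\<in>{xs. length xs = m}. W f g xs)"
    unfolding SS_def
  proof (rule sum_mono)
    fix xs
    have "(Dp f g xs)\<^sup>2 \<le> 1" using Dp_range[of f g xs] by (simp add: power_le_one)
    thus "W f g xs * (Dp f g xs)\<^sup>2 \<le> W f g xs" using W_nonneg[of f g xs] by (simp add: mult_left_le)
  qed
  also have "\<dots> = 2" by (simp add: W_def sum.distrib cp_total)
  finally show ?thesis .
qed

lemma dev_sum:
  assumes "N \<le> m"
  shows "(\<Sum>xs\<in>{xs. length xs = m}. W f g xs * (Dp f g xs - Dp f g (take N xs))\<^sup>2) = SS f g m - SS f g N"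
proof -
  have "(\<Sum>xs\<in>{xs. length xs = N + d}. W f g xs * (Dp f g xs - Dp f g (take N xs))\<^sup>2) = SS f g (N + d) - SS f g N" for d
  proof (induction d)
    case 0
    have "(\<Sum>xs\<in>{xs. length xs = N}. W f g xs * (Dp f g xs - Dp f g (take N xs))\<^sup>2) = 0"
      by (rule sum.neutral) auto
    thus ?case by simp
  next
    case (Suc d)
    let ?m = "N + d"
    have "(\<Sum>xs\<in>{xs. length xs = Suc ?m}. W f g xs * (Dp f g xs - Dp f g (take N xs))\<^sup>2)
       = (\<Sum>xs\<in>{xs. length xs = ?m}. W f g xs * (Dp f g xs - Dp f g (take N xs))\<^sup>2 +
            ((W f g (xs @ [True]) * (Dp f g (xs @ [True]))\<^sup>2 + W f g (xs @ [False]) * (Dp f g (xs @ [False]))\<^sup>2)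
             - W f g xs * (Dp f g xs)\<^sup>2))"
      unfolding sum_len_Suc
    proof (rule sum.cong)
      fix xs :: "bool list" assume "xs \<in> {xs. length xs = ?m}"
      hence t: "take N (xs @ [x]) = take N xs" for x by simp
      show "W f g (xs @ [True]) * (Dp f g (xs @ [True]) - Dp f g (take N (xs @ [True])))\<^sup>2 +
        W f g (xs @ [False]) * (Dp f g (xs @ [False]) - Dp f g (take N (xs @ [False])))\<^sup>2 =
        W f g xs * (Dp f g xs - Dp f g (take N xs))\<^sup>2 +
        (W f g (xs @ [True]) * (Dp f g (xs @ [True]))\<^sup>2 + W f g (xs @ [False]) * (Dp f g (xs @ [False]))\<^sup>2 -
         W f g xs * (Dp f g xs)\<^sup>2)"
        using sq_ident[of "W f g (xs @ [True])" "W f g (xs @ [False])" "Dp f g xs" "Dp f g (xs @ [True])" "Dp f g (xs @ [False])" "Dp f g (take N xs)"]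
          W_node[of f g xs] W_split[of f g xs] unfolding t by simp
    qed simp
    also have "\<dots> = (SS f g ?m - SS f g N) + (SS f g (Suc ?m) - SS f g ?m)"
      unfolding sum.distrib Suc.IH SS_def sum_len_Suc sum_subtractf by simp
    finally show ?case by simp
  qed
  from this[of "m - N"] assms show ?thesis by simp
qed

lemma doob_D:
  assumes "N \<le> m"
  shows "lam * (\<Sum>xs\<in>{xs. length xs = m}. if (\<exists>k\<in>{N..m}. lam \<le> (Dp f g (take k xs) - Dp f g (take N (take k xs)))\<^sup>2) then W f g xs else 0)
     \<le> SS f g m - SS f g N"
proof -
  have "lam * (\<Sum>xs\<in>{xs. length xs = m}. if (\<exists>k\<in>{N..m}. lam \<le> (\<lambda>ys. (Dp f g ys - Dp f g (take N ys))\<^sup>2) (take k xs)) then W f g xs else 0)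
     \<le> (\<Sum>xs\<in>{xs. length xs = m}. W f g xs * (\<lambda>ys. (Dp f g ys - Dp f g (take N ys))\<^sup>2) xs)"
  proof (rule doob[OF W_nonneg _ _ W_split assms])
    fix xs :: "bool list" assume l: "N \<le> length xs"
    hence t: "take N (xs @ [x]) = take N xs" for x by simp
    have "W f g xs * (Dp f g xs - Dp f g (take N xs))\<^sup>2 \<le>
       W f g (xs @ [True]) * (Dp f g (xs @ [True]) - Dp f g (take N xs))\<^sup>2 +
       W f g (xs @ [False]) * (Dp f g (xs @ [False]) - Dp f g (take N xs))\<^sup>2"
      using sq_ident[of "W f g (xs @ [True])" "W f g (xs @ [False])" "Dp f g xs" "Dp f g (xs @ [True])" "Dp f g (xs @ [False])" "Dp f g (take N xs)"]
          W_node[of f g xs] W_split[of f g xs] node_jensen[of f g xs] by simp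
    thus "W f g xs * (Dp f g xs - Dp f g (take N xs))\<^sup>2
         \<le> W f g (xs @ [True]) * (Dp f g (xs @ [True]) - Dp f g (take N (xs @ [True])))\<^sup>2 +
            W f g (xs @ [False]) * (Dp f g (xs @ [False]) - Dp f g (take N (xs @ [False])))\<^sup>2"
      unfolding t .
  qed simp
  thus ?thesis using dev_sum[OF assms, of f g] by simp
qed

lemma hm_eq: "cp f f g xs * (1 - Dp f g xs) =
   (if cp f f g xs + cp g f g xs = 0 then 0 else cp f f g xs * cp g f g xs / (cp f f g xs + cp g f g xs))"
proof -
  have a: "cp f f g xs \<ge> 0" "cp g f g xs \<ge> 0" by (rule cp_nonneg)+
  show ?thesis
  proof (cases "cp f f g xs + cp g f g xs = 0")
    case True hence "cp f f g xs = 0" using a by linarith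
    thus ?thesis by simp
  next
    case False
    hence p: "cp f f g xs + cp g f g xs > 0" using a by linarith
    hence "cp f f g xs > 0 \<or> cp g f g xs > 0" by linarith
    hence e: "Dp f g xs = cp f f g xs / (cp f f g xs + cp g f g xs)" by (simp add: Dp_def)
    have "cp f f g xs * (1 - cp f f g xs / (cp f f g xs + cp g f g xs)) = cp f f g xs * cp g f g xs / (cp f f g xs + cp g f g xs)"
      using p by (simp add: field_simps)
    thus ?thesis unfolding e using False by simp
  qed
qed

lemma u_super: "cp f f g (xs @ [True]) * (1 - Dp f g (xs @ [True])) + cp f f g (xs @ [False]) * (1 - Dp f g (xs @ [False]))
   \<le> cp f f g xs * (1 - Dp f g xs)"
proof -
  have e: "cp f f g (xs @ [True]) + cp g f g (xs @ [True]) + cp f f g (xs @ [False]) + cp g f g (xs @ [False])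
     = cp f f g xs + cp g f g xs"
    using cp_split[of f f g xs] cp_split[of g f g xs] by simp
  show ?thesis unfolding hm_eq
    using hm_super[OF cp_nonneg cp_nonneg cp_nonneg cp_nonneg, of f f g "xs @ [True]" g f g "xs @ [True]" f f g "xs @ [False]" g f g "xs @ [False]"]
    unfolding e cp_split by simp
qed

lemma ville_u:
  assumes "n0 \<le> m" "0 \<le> eta"
  shows "lam * (\<Sum>xs\<in>{xs. length xs = m}. if (\<exists>k\<in>{n0..m}. lam \<le> (1 - Dp f g (take k xs)) * (if 1 - Dp f g (take n0 (take k xs)) \<le> eta then 1 else 0)) then cp f f g xs else 0)
     \<le> eta"
proof -
  define Y where "Y ys = (1 - Dp f g ys) * (if 1 - Dp f g (take n0 ys) \<le> eta then 1 else 0)" for ys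
  have "lam * (\<Sum>xs\<in>{xs. length xs = m}. if (\<exists>k\<in>{n0..m}. lam \<le> Y (take k xs)) then cp f f g xs else 0)
     \<le> (\<Sum>xs\<in>{xs. length xs = n0}. cp f f g xs * Y xs)"
  proof (rule ville[OF cp_nonneg _ _ cp_split assms(1)])
    fix xs show "0 \<le> Y xs" unfolding Y_def using Dp_range[of f g xs] by simp
  next
    fix xs :: "bool list" assume l: "n0 \<le> length xs"
    hence t: "take n0 (xs @ [x]) = take n0 xs" for x by simp
    show "cp f f g (xs @ [True]) * Y (xs @ [True]) + cp f f g (xs @ [False]) * Y (xs @ [False]) \<le> cp f f g xs * Y xs"
      unfolding Y_def t using u_super[of f g xs] by (auto simp: algebra_simps)
  qed
  also have "\<dots> \<le> (\<Sum>xs\<in>{xs. length xs = n0}. cp f f g xs * eta)"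
  proof (rule sum_mono)
    fix xs :: "bool list" assume "xs \<in> {xs. length xs = n0}"
    hence "Y xs \<le> eta" unfolding Y_def using assms by auto
    thus "cp f f g xs * Y xs \<le> cp f f g xs * eta" using cp_nonneg by (rule mult_left_mono) 
  qed
  also have "\<dots> = eta" by (simp add: sum_distrib_right[symmetric] cp_total)
  finally show ?thesis unfolding Y_def .
qed



definition ncl :: "strategy \<Rightarrow> strategy \<Rightarrow> real \<Rightarrow> bool list \<Rightarrow> bool" where
  "ncl f g \<epsilon> xs = (\<epsilon> \<le> \<bar>pmf (f (hist f g xs)) True - pmf (g (hist f g xs)) True\<bar>)"

definition Nc :: "strategy \<Rightarrow> strategy \<Rightarrow> real \<Rightarrow> bool list \<Rightarrow> nat" where
  "Nc f g \<epsilon> xs = card {i. i < length xs \<and> ncl f g \<epsilon> (take i xs)}"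

definition Q :: "strategy \<Rightarrow> strategy \<Rightarrow> real \<Rightarrow> real \<Rightarrow> bool list \<Rightarrow> real" where
  "Q f g \<epsilon> c xs = sqrt (cp f f g xs * cp g f g xs) / c ^ Nc f g \<epsilon> xs"

lemma Nc_snoc: "Nc f g \<epsilon> (xs @ [x]) = Nc f g \<epsilon> xs + (if ncl f g \<epsilon> xs then 1 else 0)"
proof -
  have "{i. i < length (xs @ [x]) \<and> ncl f g \<epsilon> (take i (xs @ [x]))} =
     {i. i < length xs \<and> ncl f g \<epsilon> (take i xs)} \<union> (if ncl f g \<epsilon> xs then {length xs} else {})"
    by (auto simp: less_Suc_eq)
  moreover have "finite {i. i < length xs \<and> ncl f g \<epsilon> (take i xs)}" by simp
  ultimately show ?thesis unfolding Nc_def by auto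
qed

lemma pmf_False: "pmf (p :: bool pmf) False = 1 - pmf p True"
  using pmf_bool_sum[of p] by simp

lemma Q_super:
  assumes c: "c = sqrt (1 - \<epsilon>\<^sup>2)" and e: "0 < \<epsilon>" "\<epsilon> < 1"
  shows "Q f g \<epsilon> c (xs @ [True]) + Q f g \<epsilon> c (xs @ [False]) \<le> Q f g \<epsilon> c xs"
proof -
  define F where "F = cp f f g xs"
  define G where "G = cp g f g xs"
  define p where "p = pmf (f (hist f g xs)) True"
  define q where "q = pmf (g (hist f g xs)) True"
  define N where "N = Nc f g \<epsilon> xs"
  have F0: "F \<ge> 0" "G \<ge> 0" unfolding F_def G_def by (rule cp_nonneg)+
  have pq: "0 \<le> p" "p \<le> 1" "0 \<le> q" "q \<le> 1" unfolding p_def q_def by (simp_all add: pmf_le_1)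
  have cpos: "c > 0" unfolding c using e by (simp add: power_less_one_iff abs_square_less_1)
  have c1: "c \<le> 1" unfolding c by simp
  have bc: "sqrt (p * q) + sqrt ((1 - p) * (1 - q)) \<le> sqrt (1 - (p - q)\<^sup>2)" by (rule bc_ineq[OF pq])
  have sq: "sqrt (F * p * (G * q)) = sqrt (F * G) * sqrt (p * q)"
    "sqrt (F * (1 - p) * (G * (1 - q))) = sqrt (F * G) * sqrt ((1 - p) * (1 - q))"
    by (simp_all add: real_sqrt_mult[symmetric] algebra_simps)
  have LHS: "Q f g \<epsilon> c (xs @ [True]) + Q f g \<epsilon> c (xs @ [False]) =
     sqrt (F * G) * (sqrt (p * q) + sqrt ((1 - p) * (1 - q))) / c ^ (N + (if ncl f g \<epsilon> xs then 1 else 0))"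
    unfolding Q_def Nc_snoc cp_snoc pmf_False F_def[symmetric] G_def[symmetric] p_def[symmetric] q_def[symmetric] N_def[symmetric]
    using sq by (simp add: add_divide_distrib distrib_left)
  have RHS: "Q f g \<epsilon> c xs = sqrt (F * G) / c ^ N"
    unfolding Q_def F_def G_def N_def ..
  show ?thesis
  proof (cases "ncl f g \<epsilon> xs")
    case True
    hence "\<epsilon> \<le> \<bar>p - q\<bar>" unfolding ncl_def p_def q_def .
    hence "\<epsilon>\<^sup>2 \<le> (p - q)\<^sup>2" using e by (metis abs_of_pos abs_le_square_iff power2_abs)
    hence "sqrt (1 - (p - q)\<^sup>2) \<le> c" unfolding c by simp
    hence b: "sqrt (p * q) + sqrt ((1 - p) * (1 - q)) \<le> c" using bc by linarith
    have "sqrt (F * G) * (sqrt (p * q) + sqrt ((1 - p) * (1 - q))) / c ^ (N + 1) \<le> sqrt (F * G) * c / c ^ (N + 1)"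
      using b cpos F0 by (intro divide_right_mono mult_left_mono) auto
    also have "\<dots> = sqrt (F * G) / c ^ N" using cpos by simp
    finally show ?thesis unfolding LHS RHS using True by simp
  next
    case False
    have "sqrt (1 - (p - q)\<^sup>2) \<le> 1" by simp
    hence b: "sqrt (p * q) + sqrt ((1 - p) * (1 - q)) \<le> 1" using bc by linarith
    have "sqrt (F * G) * (sqrt (p * q) + sqrt ((1 - p) * (1 - q))) / c ^ N \<le> sqrt (F * G) * 1 / c ^ N"
      using b cpos F0 by (intro divide_right_mono mult_left_mono) auto
    thus ?thesis unfolding LHS RHS using False by simp
  qed
qed

lemma Q_nonneg: "c > 0 \<Longrightarrow> Q f g \<epsilon> c xs \<ge> 0"
  unfolding Q_def using cp_nonneg[of f f g xs] cp_nonneg[of g f g xs] by simp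

lemma Q_total:
  assumes c: "c = sqrt (1 - \<epsilon>\<^sup>2)" and e: "0 < \<epsilon>" "\<epsilon> < 1"
  shows "(\<Sum>xs\<in>{xs. length xs = m}. Q f g \<epsilon> c xs) \<le> 1"
proof (induction m)
  case 0
  have "{xs :: bool list. length xs = 0} = {[]}" by auto
  thus ?case by (simp add: Q_def Nc_def)
next
  case (Suc m)
  have "(\<Sum>xs\<in>{xs. length xs = Suc m}. Q f g \<epsilon> c xs) \<le> (\<Sum>xs\<in>{xs. length xs = m}. Q f g \<epsilon> c xs)"
    unfolding sum_len_Suc by (rule sum_mono) (rule Q_super[OF assms])
  thus ?case using Suc by simp
qed

lemma B1_point:
  assumes c: "0 < c" "c \<le> 1" and eta: "0 < eta" and N: "K \<le> Nc f g \<epsilon> xs" and u: "eta < 1 - Dp f g xs"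
  shows "cp f f g xs \<le> c ^ K / sqrt eta * Q f g \<epsilon> c xs"
proof -
  define F where "F = cp f f g xs"
  define G where "G = cp g f g xs"
  have F0: "F \<ge> 0" "G \<ge> 0" unfolding F_def G_def by (rule cp_nonneg)+
  show ?thesis
  proof (cases "F = 0")
    case True thus ?thesis using Q_nonneg[OF c(1)] c eta unfolding F_def by simp
  next
    case False
    hence Fp: "F > 0" using F0 by simp
    hence "Dp f g xs = F / (F + G)" unfolding Dp_def F_def G_def by simp
    hence "eta < 1 - F / (F + G)" using u by simp
    also have "1 - F / (F + G) = G / (F + G)" using Fp F0 by (simp add: field_simps)
    finally have "eta * (F + G) < G" using Fp F0 by (simp add: field_simps)
    moreover have "eta * G \<ge> 0" using eta F0 by simp
    ultimately have "eta * F \<le> G" by (simp add: distrib_left)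
    hence "eta * F * F \<le> F * G" using Fp by (simp add: mult_right_mono algebra_simps)
    hence "sqrt (eta * F * F) \<le> sqrt (F * G)" by simp
    moreover have "sqrt (eta * F * F) = sqrt eta * F"
      using Fp by (metis mult.assoc real_sqrt_mult real_sqrt_abs2 abs_of_pos)
    ultimately have s: "sqrt eta * F \<le> sqrt (F * G)" by simp
    have cN: "c ^ Nc f g \<epsilon> xs \<le> c ^ K" using c N by (simp add: power_decreasing)
    have cpos: "0 < c ^ Nc f g \<epsilon> xs" "0 < c ^ K" using c by simp_all
    have "F \<le> sqrt (F * G) / sqrt eta" using s eta by (simp add: pos_le_divide_eq mult.commute)
    also have "\<dots> = c ^ Nc f g \<epsilon> xs / sqrt eta * (sqrt (F * G) / c ^ Nc f g \<epsilon> xs)" using cpos c by simp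
    also have "\<dots> \<le> c ^ K / sqrt eta * (sqrt (F * G) / c ^ Nc f g \<epsilon> xs)"
      using cN cpos eta F0 by (intro mult_right_mono divide_right_mono) auto
    finally show ?thesis unfolding Q_def F_def G_def .
  qed
qed

lemma close_pre: "\<not> eps_close f g \<epsilon> \<omega> (Suc i) \<longleftrightarrow> ncl f g \<epsilon> (pre \<omega> i)"
proof -
  have h: "hist f g (pre \<omega> i) = play_path f g \<omega> i"
    unfolding hist_def length_pre by (rule play_path_local) (simp add: ext_pre)
  have "\<bar>pmf p (\<omega> i) - pmf q (\<omega> i)\<bar> = \<bar>pmf p True - pmf q True\<bar>" for p q :: "bool pmf"
    by (cases "\<omega> i") (simp_all add: pmf_False abs_minus_commute)
  thus ?thesis unfolding eps_close_def ncl_def h by (simp add: not_less)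
qed

lemma card_bound:
  assumes "n > 0"
  shows "card {t \<in> {1..n}. \<not> eps_close f g \<epsilon> \<omega> t} \<le> Nc f g \<epsilon> (pre \<omega> (n - 1)) + 1"
proof -
  define A where "A = {i. i < length (pre \<omega> (n - 1)) \<and> ncl f g \<epsilon> (take i (pre \<omega> (n - 1)))}"
  have finA: "finite A" unfolding A_def by simp
  have "{t \<in> {1..n}. \<not> eps_close f g \<epsilon> \<omega> t} \<subseteq> Suc ` A \<union> {n}"
  proof
    fix t assume t: "t \<in> {t \<in> {1..n}. \<not> eps_close f g \<epsilon> \<omega> t}"
    show "t \<in> Suc ` A \<union> {n}"
    proof (cases "t = n")
      case False
      then obtain i where i: "t = Suc i" "i < n - 1" using t by (cases t) auto
      hence "ncl f g \<epsilon> (pre \<omega> i)" using t close_pre by auto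
      hence "i \<in> A" unfolding A_def using i by (simp add: take_pre)
      thus ?thesis using i by auto
    qed simp
  qed
  hence "card {t \<in> {1..n}. \<not> eps_close f g \<epsilon> \<omega> t} \<le> card (Suc ` A \<union> {n})"
    using finA by (intro card_mono) auto
  also have "\<dots> \<le> card (Suc ` A) + card {n}" by (rule card_Un_le)
  also have "\<dots> \<le> card A + 1" using card_image_le[OF finA, of Suc] by simp
  finally show ?thesis unfolding A_def Nc_def .
qed



lemma char_pre:
  "(\<exists>k\<in>{a..m}. P (take k (pre \<omega> m)) (take a (take k (pre \<omega> m)))) \<longleftrightarrow> (\<exists>k\<in>{a..m}. P (pre \<omega> k) (pre \<omega> a))"
proof -
  have "take k (pre \<omega> m) = pre \<omega> k" "take a (pre \<omega> k) = pre \<omega> a" if "k \<in> {a..m}" for k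
    using that by (simp_all add: take_pre)
  thus ?thesis by (metis (no_types, lifting))
qed

lemma B1_meas:
  assumes M: "induced_measure_fst f g M" and c: "c = sqrt (1 - \<epsilon>\<^sup>2)" and e: "0 < \<epsilon>" "\<epsilon> < 1" and eta: "0 < eta"
  shows "measure M {\<omega>. K \<le> Nc f g \<epsilon> (pre \<omega> n0) \<and> eta < 1 - Dp f g (pre \<omega> n0)} \<le> c ^ K / sqrt eta"
proof -
  have cpos: "c > 0" unfolding c using e by (simp add: power_less_one_iff abs_square_less_1)
  have c1: "c \<le> 1" unfolding c by simp
  have "measure M {\<omega>. K \<le> Nc f g \<epsilon> (pre \<omega> n0) \<and> eta < 1 - Dp f g (pre \<omega> n0)}
     \<le> (\<Sum>xs\<in>{xs. length xs = n0}. if K \<le> Nc f g \<epsilon> xs \<and> eta < 1 - Dp f g xs then cp f f g xs else 0)"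
    by (rule pre_measure[OF M])
  also have "\<dots> \<le> (\<Sum>xs\<in>{xs. length xs = n0}. c ^ K / sqrt eta * Q f g \<epsilon> c xs)"
  proof (rule sum_mono)
    fix xs
    show "(if K \<le> Nc f g \<epsilon> xs \<and> eta < 1 - Dp f g xs then cp f f g xs else 0) \<le> c ^ K / sqrt eta * Q f g \<epsilon> c xs"
      using B1_point[OF cpos c1 eta, of K f g \<epsilon> xs] Q_nonneg[OF cpos, of f g \<epsilon> xs] cpos eta by auto
  qed
  also have "\<dots> = c ^ K / sqrt eta * (\<Sum>xs\<in>{xs. length xs = n0}. Q f g \<epsilon> c xs)"
    by (simp add: sum_distrib_left)
  also have "\<dots> \<le> c ^ K / sqrt eta * 1"
    using Q_total[OF c e, of f g n0] cpos eta by (intro mult_left_mono) auto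
  finally show ?thesis by simp
qed

lemma B2_meas:
  assumes M: "induced_measure_fst f g M" and eta: "0 \<le> eta" and lam: "0 < lam"
  shows "measure M {\<omega>. \<exists>k\<in>{n0..m}. lam \<le> (1 - Dp f g (pre \<omega> k)) * (if 1 - Dp f g (pre \<omega> n0) \<le> eta then 1 else 0)} \<le> eta / lam"
proof -
  let ?P = "\<lambda>xs. \<exists>k\<in>{n0..m}. lam \<le> (1 - Dp f g (take k xs)) * (if 1 - Dp f g (take n0 (take k xs)) \<le> eta then 1 else 0)"
  have eq: "{\<omega>. \<exists>k\<in>{n0..m}. lam \<le> (1 - Dp f g (pre \<omega> k)) * (if 1 - Dp f g (pre \<omega> n0) \<le> eta then 1 else 0)} = {\<omega>. ?P (pre \<omega> m)}"
    using char_pre[of n0 m "\<lambda>x y. lam \<le> (1 - Dp f g x) * (if 1 - Dp f g y \<le> eta then 1 else 0)"] by auto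
  have "measure M {\<omega>. ?P (pre \<omega> m)} \<le> (\<Sum>xs\<in>{xs. length xs = m}. if ?P xs then cp f f g xs else 0)"
    by (rule pre_measure[OF M])
  also have "\<dots> \<le> eta / lam"
  proof (cases "n0 \<le> m")
    case True
    show ?thesis using ville_u[OF True eta, of lam f g] lam by (simp add: pos_le_divide_eq mult.commute)
  next
    case False
    hence "(\<Sum>xs\<in>{xs. length xs = m}. if ?P xs then cp f f g xs else 0) = 0" by simp
    thus ?thesis using eta lam by simp
  qed
  finally show ?thesis unfolding eq .
qed

lemma B3_meas:
  assumes M: "induced_measure_fst f g M" and th: "0 < th" and Nm: "N \<le> m"
  shows "measure M {\<omega>. \<exists>k\<in>{N..m}. th \<le> (Dp f g (pre \<omega> k) - Dp f g (pre \<omega> N))\<^sup>2} \<le> (SS f g m - SS f g N) / th"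
proof -
  let ?P = "\<lambda>xs. \<exists>k\<in>{N..m}. th \<le> (Dp f g (take k xs) - Dp f g (take N (take k xs)))\<^sup>2"
  have eq: "{\<omega>. \<exists>k\<in>{N..m}. th \<le> (Dp f g (pre \<omega> k) - Dp f g (pre \<omega> N))\<^sup>2} = {\<omega>. ?P (pre \<omega> m)}"
    using char_pre[of N m "\<lambda>x y. th \<le> (Dp f g x - Dp f g y)\<^sup>2"] by auto
  have "measure M {\<omega>. ?P (pre \<omega> m)} \<le> (\<Sum>xs\<in>{xs. length xs = m}. if ?P xs then cp f f g xs else 0)"
    by (rule pre_measure[OF M])
  also have "\<dots> \<le> (\<Sum>xs\<in>{xs. length xs = m}. if ?P xs then W f g xs else 0)"
    by (rule sum_mono) (simp add: cp_le_W)
  also have "\<dots> \<le> (SS f g m - SS f g N) / th"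
    using doob_D[OF Nm, of th f g] th by (simp add: pos_le_divide_eq mult.commute)
  finally show ?thesis unfolding eq .
qed



lemma pre_sets2:
  assumes M: "induced_measure_fst f g M"
  shows "{\<omega>. \<exists>k\<in>{a..m}. P (pre \<omega> k) (pre \<omega> a)} \<in> sets M"
proof -
  have "{\<omega>. \<exists>k\<in>{a..m}. P (pre \<omega> k) (pre \<omega> a)} = {\<omega>. (\<lambda>xs. \<exists>k\<in>{a..m}. P (take k xs) (take a (take k xs))) (pre \<omega> m)}"
    using char_pre[of a m P] by auto
  thus ?thesis using pre_sets[OF M] by simp
qed

lemma inc_lim_le:
  assumes "finite_measure M" "range A \<subseteq> sets M" "incseq A" "\<And>m. measure M (A m) \<le> b"
  shows "measure M (\<Union>m. A m) \<le> b"
  using LIMSEQ_le_const2[OF finite_measure.finite_Lim_measure_incseq[OF assms(1-3)]] assms(4) by blast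

theorem mainTheorem9:
  fixes \<epsilon> :: real
  assumes "0 < \<epsilon>" and "\<epsilon> < 1"
  shows "\<exists>K::nat. K > 0 \<and>
    (\<forall>(f::strategy) (g::strategy) (n::nat) M. n > 0 \<longrightarrow> induced_measure_fst f g M \<longrightarrow>
      (\<exists>S \<in> sets M. measure M S \<ge> 1 - \<epsilon> \<and>
        (\<forall>\<omega>\<in>S.
          card {t \<in> {1..n}. \<not> eps_close f g \<epsilon> \<omega> t} \<le> K
          \<or> (\<omega> \<in> L_D f g (1 - \<epsilon>) \<and>
             (\<forall>t\<ge>n. \<bar>D_test f g \<omega> t - D_test f g \<omega> n\<bar> < \<epsilon>)))))"
proof -
  note e = assms
  define c where "c = sqrt (1 - \<epsilon>\<^sup>2)"
  define eta where "eta = \<epsilon>\<^sup>2 / 8"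
  define lam where "lam = \<epsilon> / 2"
  have cpos: "0 < c" unfolding c_def using e by (simp add: power_less_one_iff abs_square_less_1)
  have c1: "c < 1" unfolding c_def using e by simp
  have etapos: "0 < eta" unfolding eta_def using e by simp
  have lampos: "0 < lam" unfolding lam_def using e by simp
  have eta_lam: "eta < lam" unfolding eta_def lam_def using e by (simp add: power2_eq_square)
  have lam_e: "lam < \<epsilon>" unfolding lam_def using e by simp
  have eta_div: "eta / lam = \<epsilon> / 4" unfolding eta_def lam_def using e by (simp add: power2_eq_square)
  obtain K0 where K0: "c ^ K0 < sqrt eta * \<epsilon> / 4"
    using real_arch_pow_inv[of "sqrt eta * \<epsilon> / 4" c] c1 etapos e by auto
  define K where "K = Suc K0"
  have "c ^ K \<le> c ^ K0" unfolding K_def using cpos c1 by simp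
  hence Kb: "c ^ K / sqrt eta \<le> \<epsilon> / 4" using K0 etapos by (simp add: pos_divide_le_eq mult.commute)
  show ?thesis
  proof (intro exI[of _ K] conjI allI impI)
    show "K > 0" unfolding K_def by simp
  next
    fix f g :: strategy and n :: nat and M
    assume n: "0 < n" and M: "induced_measure_fst f g M"
    interpret prob_space M using M by (simp add: induced_measure_fst_def)
    have spM: "space M = UNIV" by (rule space_M[OF M])
    define n0 where "n0 = n - 1"
    define B1 where "B1 = {\<omega>. K \<le> Nc f g \<epsilon> (pre \<omega> n0) \<and> eta < 1 - Dp f g (pre \<omega> n0)}"
    define B2m where "B2m m = {\<omega>. \<exists>k\<in>{n0..m}. lam \<le> (1 - Dp f g (pre \<omega> k)) * (if 1 - Dp f g (pre \<omega> n0) \<le> eta then 1 else 0)}" for m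
    define B2 where "B2 = (\<Union>m. B2m m)"
    have SSb: "\<forall>i. SS f g i \<le> 2" using SS_bound by blast
    have cau: "Cauchy (SS f g)"
    proof -
      obtain L where "SS f g \<longlonglongrightarrow> L" "\<forall>i. SS f g i \<le> L"
        by (rule incseq_convergent[OF SS_incseq SSb])
      thus ?thesis by (intro convergent_Cauchy convergentI)
    qed
    define th where "th j = ((1/2::real) ^ j)\<^sup>2" for j
    define tol where "tol j = th j * (\<epsilon> / 8 * (1/2) ^ j)" for j
    have thpos: "0 < th j" for j unfolding th_def by simp
    have tolpos: "0 < tol j" for j unfolding tol_def using thpos e by simp
    have ex: "\<forall>j. \<exists>N. \<forall>m\<ge>N. SS f g m - SS f g N < tol j"
    proof
      fix j
      obtain N where N: "\<forall>m\<ge>N. \<forall>n\<ge>N. norm (SS f g m - SS f g n) < tol j" using CauchyD[OF cau tolpos] by blast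
      show "\<exists>N. \<forall>m\<ge>N. SS f g m - SS f g N < tol j"
      proof (intro exI[of _ N] allI impI)
        fix m assume "N \<le> m"
        hence "norm (SS f g m - SS f g N) < tol j" using N by blast
        thus "SS f g m - SS f g N < tol j" by simp
      qed
    qed
    obtain Nj where Nj0: "\<forall>j. \<forall>m\<ge>Nj j. SS f g m - SS f g (Nj j) < tol j"
      using choice[OF ex] by blast
    have Nj: "\<And>j m. m \<ge> Nj j \<Longrightarrow> SS f g m - SS f g (Nj j) < tol j" using Nj0 by blast
    define B3m where "B3m j m = {\<omega>. \<exists>k\<in>{Nj j..m}. th j \<le> (Dp f g (pre \<omega> k) - Dp f g (pre \<omega> (Nj j)))\<^sup>2}" for j m
    define B3 where "B3 j = (\<Union>m. B3m j m)" for j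
    define Bad where "Bad = B1 \<union> B2 \<union> (\<Union>j. B3 j)"
    define S where "S = space M - Bad"
    have B1s: "B1 \<in> sets M" unfolding B1_def by (rule pre_sets[OF M])
    have B2ms: "B2m m \<in> sets M" for m unfolding B2m_def by (rule pre_sets2[OF M])
    have B2s: "B2 \<in> sets M" unfolding B2_def by (rule sets.countable_UN) (use B2ms in blast)
    have B3ms: "B3m j m \<in> sets M" for j m unfolding B3m_def by (rule pre_sets2[OF M])
    have B3s: "B3 j \<in> sets M" for j unfolding B3_def by (rule sets.countable_UN) (use B3ms in blast)
    have B3Us: "(\<Union>j. B3 j) \<in> sets M" by (rule sets.countable_UN) (use B3s in blast)
    have Bads: "Bad \<in> sets M" unfolding Bad_def by (intro sets.Un B1s B2s B3Us)
    have Ss: "S \<in> sets M" unfolding S_def by (intro sets.Diff sets.top Bads)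
    have mB1: "measure M B1 \<le> \<epsilon> / 4"
      using B1_meas[OF M c_def e etapos, of K n0] Kb unfolding B1_def by linarith
    have mB2: "measure M B2 \<le> \<epsilon> / 4"
    proof -
      have "measure M B2 \<le> eta / lam" unfolding B2_def
      proof (rule inc_lim_le)
        show "finite_measure M" by unfold_locales
        show "range B2m \<subseteq> sets M" using B2ms by auto
        show "incseq B2m" by (rule incseq_SucI) (auto simp: B2m_def)
        show "measure M (B2m m) \<le> eta / lam" for m
          unfolding B2m_def by (rule B2_meas[OF M _ lampos]) (use etapos in simp)
      qed
      thus ?thesis using eta_div by simp
    qed
    have mB3j: "measure M (B3 j) \<le> \<epsilon> / 8 * (1/2) ^ j" for j
      unfolding B3_def
    proof (rule inc_lim_le)
      show "finite_measure M" by unfold_locales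
      show "range (B3m j) \<subseteq> sets M" using B3ms by auto
      show "incseq (B3m j)" by (rule incseq_SucI) (auto simp: B3m_def)
      show "measure M (B3m j m) \<le> \<epsilon> / 8 * (1/2) ^ j" for m
      proof (cases "Nj j \<le> m")
        case True
        have "measure M (B3m j m) \<le> (SS f g m - SS f g (Nj j)) / th j"
          unfolding B3m_def by (rule B3_meas[OF M thpos True])
        also have "\<dots> \<le> tol j / th j" using Nj[OF True] thpos[of j] by (simp add: divide_right_mono)
        also have "\<dots> = \<epsilon> / 8 * (1/2) ^ j" unfolding tol_def using thpos[of j] by simp
        finally show ?thesis .
      next
        case False
        hence "B3m j m = {}" unfolding B3m_def by auto
        thus ?thesis using e by simp
      qed
    qed
    have geo: "(\<lambda>j. \<epsilon> / 8 * (1/2::real) ^ j) sums (\<epsilon> / 4)"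
      using sums_mult[OF geometric_sums[of "1/2::real"], of "\<epsilon> / 8"] by simp
    have mB3: "measure M (\<Union>j. B3 j) \<le> \<epsilon> / 4"
    proof -
      have summ: "summable (\<lambda>j. measure M (B3 j))"
        by (rule summable_comparison_test'[OF sums_summable[OF geo], of 0]) (use mB3j in auto)
      have "measure M (\<Union>j. B3 j) \<le> (\<Sum>j. measure M (B3 j))"
        by (rule finite_measure_subadditive_countably) (use B3s summ in auto)
      also have "\<dots> \<le> (\<Sum>j. \<epsilon> / 8 * (1/2) ^ j)"
        by (rule suminf_le[OF mB3j summ sums_summable[OF geo]])
      also have "\<dots> = \<epsilon> / 4" using geo by (simp add: sums_iff)
      finally show ?thesis .
    qed
    have mBad: "measure M Bad \<le> 3 * \<epsilon> / 4"
    proof -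
      have "measure M Bad \<le> measure M (B1 \<union> B2) + measure M (\<Union>j. B3 j)"
        unfolding Bad_def by (rule measure_Un_le) (use B1s B2s B3Us in auto)
      moreover have "measure M (B1 \<union> B2) \<le> measure M B1 + measure M B2"
        by (rule measure_Un_le) (use B1s B2s in auto)
      ultimately show ?thesis using mB1 mB2 mB3 by linarith
    qed
    have mS: "measure M S \<ge> 1 - \<epsilon>"
      unfolding S_def using prob_compl[OF Bads] mBad e by linarith
    show "\<exists>S \<in> sets M. measure M S \<ge> 1 - \<epsilon> \<and>
        (\<forall>\<omega>\<in>S.
          card {t \<in> {1..n}. \<not> eps_close f g \<epsilon> \<omega> t} \<le> K
          \<or> (\<omega> \<in> L_D f g (1 - \<epsilon>) \<and>
             (\<forall>t\<ge>n. \<bar>D_test f g \<omega> t - D_test f g \<omega> n\<bar> < \<epsilon>)))"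
    proof (intro bexI[OF _ Ss] conjI mS ballI)
      fix \<omega> assume \<omega>: "\<omega> \<in> S"
      hence nB1: "\<omega> \<notin> B1" and nB2: "\<And>m. \<omega> \<notin> B2m m" and nB3: "\<And>j m. \<omega> \<notin> B3m j m"
        unfolding S_def Bad_def B2_def B3_def by auto
      show "card {t \<in> {1..n}. \<not> eps_close f g \<epsilon> \<omega> t} \<le> K
          \<or> (\<omega> \<in> L_D f g (1 - \<epsilon>) \<and> (\<forall>t\<ge>n. \<bar>D_test f g \<omega> t - D_test f g \<omega> n\<bar> < \<epsilon>))"
      proof (cases "card {t \<in> {1..n}. \<not> eps_close f g \<epsilon> \<omega> t} \<le> K")
        case False
        have "K \<le> Nc f g \<epsilon> (pre \<omega> n0)" using card_bound[OF n, of f g \<epsilon> \<omega>] False unfolding n0_def by linarith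
        hence u0: "1 - Dp f g (pre \<omega> n0) \<le> eta" using nB1 unfolding B1_def by auto
        have uk: "1 - Dp f g (pre \<omega> k) < lam" if "n0 \<le> k" for k
        proof -
          have "\<forall>k'\<in>{n0..k}. \<not> lam \<le> (1 - Dp f g (pre \<omega> k')) * (if 1 - Dp f g (pre \<omega> n0) \<le> eta then 1 else 0)"
            using nB2[of k] unfolding B2m_def by blast
          hence "\<not> lam \<le> (1 - Dp f g (pre \<omega> k)) * (if 1 - Dp f g (pre \<omega> n0) \<le> eta then 1 else 0)"
            using that by simp
          thus ?thesis using u0 by simp
        qed
        define s where "s k = Dp f g (pre \<omega> k)" for k
        have sj: "\<bar>s k - s (Nj j)\<bar> < (1/2) ^ j" if "Nj j \<le> k" for j k
        proof -
          have "\<forall>k'\<in>{Nj j..k}. \<not> th j \<le> (s k' - s (Nj j))\<^sup>2"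
            using nB3[of j k] unfolding B3m_def s_def by blast
          hence "(s k - s (Nj j))\<^sup>2 < th j" using that by (simp add: not_le)
          hence "\<bar>s k - s (Nj j)\<bar>\<^sup>2 < ((1/2) ^ j)\<^sup>2" unfolding th_def by simp
          thus ?thesis by (rule power_less_imp_less_base) simp
        qed
        have "Cauchy s"
        proof (rule CauchyI)
          fix r :: real assume r: "0 < r"
          obtain j where j: "(1/2::real) ^ j < r / 2" using real_arch_pow_inv[of "r/2" "1/2::real"] r by auto
          show "\<exists>M. \<forall>m\<ge>M. \<forall>n\<ge>M. norm (s m - s n) < r"
          proof (intro exI[of _ "Nj j"] allI impI)
            fix m n' assume "Nj j \<le> m" "Nj j \<le> n'"
            thus "norm (s m - s n') < r" using sj[of j m] sj[of j n'] j by auto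
          qed
        qed
        hence conv: "convergent s" by (simp add: Cauchy_convergent_iff)
        hence ls: "s \<longlonglongrightarrow> lim s" by (simp add: convergent_LIMSEQ_iff)
        have DS: "(\<lambda>k. D_test f g \<omega> (Suc k)) = s" unfolding s_def by (simp add: D_test_Suc)
        have lD: "D_test f g \<omega> \<longlonglongrightarrow> lim s" using ls unfolding DS[symmetric] by (rule LIMSEQ_imp_Suc)
        have "\<exists>N. \<forall>k\<ge>N. 1 - lam \<le> s k"
        proof (intro exI[of _ n0] allI impI)
          fix k assume "n0 \<le> k"
          thus "1 - lam \<le> s k" using uk[of k] unfolding s_def by linarith
        qed
        hence "1 - lam \<le> lim s" by (rule LIMSEQ_le_const[OF ls])
        hence LD: "\<omega> \<in> L_D f g (1 - \<epsilon>)" unfolding L_D_def using lD lam_e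
          by (auto simp: convergent_def limI)
        have "\<bar>D_test f g \<omega> t - D_test f g \<omega> n\<bar> < \<epsilon>" if t: "t \<ge> n" for t
        proof -
          obtain t' where tt: "t = Suc t'" using t n by (cases t) auto
          have nn: "n = Suc n0" using n unfolding n0_def by simp
          have "D_test f g \<omega> t = s (t - 1)" "D_test f g \<omega> n = s n0"
            unfolding tt nn by (simp_all add: D_test_Suc s_def)
          moreover have "1 - lam < s (t - 1)" "s (t - 1) \<le> 1" "1 - lam < s n0" "s n0 \<le> 1"
          proof -
            have "n0 \<le> t - 1" using t unfolding n0_def by simp
            thus "1 - lam < s (t - 1)" "s (t - 1) \<le> 1" "1 - lam < s n0" "s n0 \<le> 1"
              using uk[of "t - 1"] uk[of n0] Dp_range unfolding s_def by auto
          qed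
          ultimately show ?thesis using lam_e by auto
        qed
        thus ?thesis using LD by auto
      qed simp
    qed
  qed
qed


end
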